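(* For $\alpha_1,\alpha_2\in\mathbb C$ let $K_2(\alpha_1,\alpha_2)$ be the complex Leibniz algebra with basis $\{l,p_+,p_-,X_1,X_2,X_3\}$ whose only nonzero products are $[l,p_+]=p_+$, $[p_+,l]=-p_+$, $[l,p_-]=-p_-$, $[p_-,l]=p_-$, $[l,l]=\alpha_1X_3$, $[p_+,p_-]=\alpha_2X_3$, $[p_-,p_+]=-\alpha_2X_3$, $[X_1,p_-]=-X_3$, $[X_1,l]=-X_1$, $[X_2,p_+]=X_3$, $[X_2,l]=X_2$. Then every algebra $K_2(\alpha_1,\alpha_2)$ is isomorphic to one of $K_2(1,1)$, $K_2(1,0)$, $K_2(0,1)$, $K_2(0,0)$, and these four algebras are pairwise non-isomorphic.
   Context: A (right) Leibniz algebra is a vector space with a bilinear bracket satisfying $[[x,y],z]=[[x,z],y]+[x,[y,z]]$. *)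

theory Defs
  imports Complex_Main "HOL-Library.Numeral_Type"
begin

text \<open>Vectors of the 6-dimensional complex space, coordinates indexed by the finite
type 6. Basis index convention: 0 = l, 1 = p_+, 2 = p_-, 3 = X_1, 4 = X_2, 5 = X_3.\<close>

type_synonym vec6 = "6 \<Rightarrow> complex"

definition ebas :: "6 \<Rightarrow> vec6" where
  "ebas i = (\<lambda>k. if k = i then 1 else 0)"

definition K2_bb :: "complex \<Rightarrow> complex \<Rightarrow> 6 \<Rightarrow> 6 \<Rightarrow> vec6" where
  "K2_bb a1 a2 i j =
     (if i = 0 \<and> j = 1 then ebas 1
      else if i = 1 \<and> j = 0 then (\<lambda>k. - ebas 1 k)
      else if i = 0 \<and> j = 2 then (\<lambda>k. - ebas 2 k)
      else if i = 2 \<and> j = 0 then ebas 2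
      else if i = 0 \<and> j = 0 then (\<lambda>k. a1 * ebas 5 k)
      else if i = 1 \<and> j = 2 then (\<lambda>k. a2 * ebas 5 k)
      else if i = 2 \<and> j = 1 then (\<lambda>k. - a2 * ebas 5 k)
      else if i = 3 \<and> j = 2 then (\<lambda>k. - ebas 5 k)
      else if i = 3 \<and> j = 0 then (\<lambda>k. - ebas 3 k)
      else if i = 4 \<and> j = 1 then ebas 5
      else if i = 4 \<and> j = 0 then ebas 4
      else (\<lambda>k. 0))"

definition K2_br :: "complex \<Rightarrow> complex \<Rightarrow> vec6 \<Rightarrow> vec6 \<Rightarrow> vec6" where
  "K2_br a1 a2 u v = (\<lambda>k. \<Sum>i\<in>UNIV. \<Sum>j\<in>UNIV. u i * v j * K2_bb a1 a2 i j k)"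

text \<open>The linear map with matrix A (A i k = k-th coordinate of the image of basis vector i).\<close>
definition linmap :: "(6 \<Rightarrow> 6 \<Rightarrow> complex) \<Rightarrow> vec6 \<Rightarrow> vec6" where
  "linmap A v = (\<lambda>k. \<Sum>i\<in>UNIV. v i * A i k)"

definition K2_isomorphic :: "complex \<times> complex \<Rightarrow> complex \<times> complex \<Rightarrow> bool" where
  "K2_isomorphic a b =
     (\<exists>A B. (\<forall>v. linmap B (linmap A v) = v) \<and> (\<forall>v. linmap A (linmap B v) = v) \<and>
        (\<forall>u v. linmap A (K2_br (fst a) (snd a) u v)
               = K2_br (fst b) (snd b) (linmap A u) (linmap A v)))"

end

theory Submission imports Defs begin
lemma six_cases: "(x::6) = 0 \<or> x = 1 \<or> x = 2 \<or> x = 3 \<or> x = 4 \<or> x = 5"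
proof (induct x rule: bit0_induct)
  case (of_int z)
  then have "z = 0 \<or> z = 1 \<or> z = 2 \<or> z = 3 \<or> z = 4 \<or> z = 5" by auto
  then show ?case by auto
qed
lemma distinct6: "(0::6) \<noteq> 1" "(0::6) \<noteq> 2" "(0::6) \<noteq> 3" "(0::6) \<noteq> 4" "(0::6) \<noteq> 5"
  "(1::6) \<noteq> 2" "(1::6) \<noteq> 3" "(1::6) \<noteq> 4" "(1::6) \<noteq> 5"
  "(2::6) \<noteq> 3" "(2::6) \<noteq> 4" "(2::6) \<noteq> 5" "(3::6) \<noteq> 4" "(3::6) \<noteq> 5" "(4::6) \<noteq> 5"
  by simp_all
lemma distinct6': "(1::6) \<noteq> 0" "(2::6) \<noteq> 0" "(3::6) \<noteq> 0" "(4::6) \<noteq> 0" "(5::6) \<noteq> 0"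
  "(2::6) \<noteq> 1" "(3::6) \<noteq> 1" "(4::6) \<noteq> 1" "(5::6) \<noteq> 1"
  "(3::6) \<noteq> 2" "(4::6) \<noteq> 2" "(5::6) \<noteq> 2" "(4::6) \<noteq> 3" "(5::6) \<noteq> 3" "(5::6) \<noteq> 4"
  by simp_all
lemma U6: "(UNIV::6 set) = {0,1,2,3,4,5}"
  using six_cases by blast
lemma sum6: "(\<Sum>i\<in>(UNIV::6 set). f i) = f 0 + f 1 + f 2 + f 3 + f 4 + f 5"
  unfolding U6 by (simp add: distinct6 distinct6' ac_simps)
lemma brc:
  "K2_br a1 a2 u v 0 = 0"
  "K2_br a1 a2 u v 1 = u 0 * v 1 - u 1 * v 0"
  "K2_br a1 a2 u v 2 = u 2 * v 0 - u 0 * v 2"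
  "K2_br a1 a2 u v 3 = - (u 3 * v 0)"
  "K2_br a1 a2 u v 4 = u 4 * v 0"
  "K2_br a1 a2 u v 5 = a1 * u 0 * v 0 + a2 * (u 1 * v 2 - u 2 * v 1) - u 3 * v 2 + u 4 * v 1"
  unfolding K2_br_def sum6 K2_bb_def ebas_def
  by (simp_all add: distinct6 distinct6' algebra_simps)

lemma linc: "linmap A v k = v 0 * A 0 k + v 1 * A 1 k + v 2 * A 2 k + v 3 * A 3 k + v 4 * A 4 k + v 5 * A 5 k"
  unfolding linmap_def sum6 by simp

lemma ifm: "(if P then (1::complex) else 0) * x = (if P then x else 0)"
  "(if P then x else 0) * y = (if P then x * y else 0)"
  "(- (if P then (1::complex) else 0)) * x = (if P then - x else 0)"
  "c * (if P then (1::complex) else 0) = (if P then c else 0)"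
  by simp_all

lemma lin_e: "linmap A (ebas i) = A i"
  unfolding linmap_def ebas_def by (simp add: fun_eq_iff ifm)

lemma lin_neg: "linmap A (\<lambda>k. - ebas i k) = (\<lambda>k. - A i k)"
  unfolding linmap_def ebas_def by (simp add: fun_eq_iff ifm sum_negf)

lemma lin_sc: "linmap A (\<lambda>k. c * ebas i k) = (\<lambda>k. c * A i k)"
  unfolding linmap_def ebas_def by (simp add: fun_eq_iff ifm)

lemma lin_0: "linmap A (\<lambda>k. 0) = (\<lambda>k. 0)"
  unfolding linmap_def by simp

lemma br_e: "K2_br a1 a2 (ebas i) (ebas j) = K2_bb a1 a2 i j"
  unfolding K2_br_def ebas_def by (simp add: fun_eq_iff ifm)

lemma iso_sym:
  assumes "K2_isomorphic a b" shows "K2_isomorphic b a"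
proof -
  obtain A B where BA: "\<forall>v. linmap B (linmap A v) = v" and AB: "\<forall>v. linmap A (linmap B v) = v"
    and H: "\<forall>u v. linmap A (K2_br (fst a) (snd a) u v) = K2_br (fst b) (snd b) (linmap A u) (linmap A v)"
    using assms unfolding K2_isomorphic_def by blast
  have "\<forall>u v. linmap B (K2_br (fst b) (snd b) u v) = K2_br (fst a) (snd a) (linmap B u) (linmap B v)"
  proof (intro allI)
    fix u v
    have "K2_br (fst b) (snd b) u v = linmap A (K2_br (fst a) (snd a) (linmap B u) (linmap B v))"
      using H AB by simp
    then show "linmap B (K2_br (fst b) (snd b) u v) = K2_br (fst a) (snd a) (linmap B u) (linmap B v)"
      using BA by simp
  qed
  then show ?thesis unfolding K2_isomorphic_def using AB BA by blast
qed

lemma inv1: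
  assumes "K2_isomorphic (a1,a2) (b1,b2)"
  shows "a1 = 0 \<longleftrightarrow> b1 = 0" and "b2 = 0 \<longrightarrow> a2 = 0"
proof -
  obtain A B where BA: "\<forall>v. linmap B (linmap A v) = v" and AB: "\<forall>v. linmap A (linmap B v) = v"
    and H: "\<forall>u v. linmap A (K2_br a1 a2 u v) = K2_br b1 b2 (linmap A u) (linmap A v)"
    using assms unfolding K2_isomorphic_def fst_conv snd_conv by blast
  have E: "linmap A (K2_bb a1 a2 i j) = K2_br b1 b2 (A i) (A j)" for i j
    using H[rule_format, of "ebas i" "ebas j"] by (simp add: br_e lin_e)
  have bb: "K2_bb a1 a2 0 1 = ebas 1" "K2_bb a1 a2 2 0 = ebas 2" "K2_bb a1 a2 3 0 = (\<lambda>k. - ebas 3 k)"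
    "K2_bb a1 a2 4 0 = ebas 4" "K2_bb a1 a2 4 1 = ebas 5" "K2_bb a1 a2 0 0 = (\<lambda>k. a1 * ebas 5 k)"
    "K2_bb a1 a2 1 2 = (\<lambda>k. a2 * ebas 5 k)" "K2_bb a1 a2 0 5 = (\<lambda>k. 0)" "K2_bb a1 a2 5 0 = (\<lambda>k. 0)"
    by (simp_all add: K2_bb_def distinct6 distinct6')
  have E01: "A 1 = K2_br b1 b2 (A 0) (A 1)" using E[of 0 1] unfolding bb lin_e .
  have E20: "A 2 = K2_br b1 b2 (A 2) (A 0)" using E[of 2 0] unfolding bb lin_e .
  have E30: "(\<lambda>k. - A 3 k) = K2_br b1 b2 (A 3) (A 0)" using E[of 3 0] unfolding bb lin_neg .
  have E40: "A 4 = K2_br b1 b2 (A 4) (A 0)" using E[of 4 0] unfolding bb lin_e .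
  have E41: "A 5 = K2_br b1 b2 (A 4) (A 1)" using E[of 4 1] unfolding bb lin_e .
  have E00: "(\<lambda>k. a1 * A 5 k) = K2_br b1 b2 (A 0) (A 0)" using E[of 0 0] unfolding bb lin_sc .
  have E12: "(\<lambda>k. a2 * A 5 k) = K2_br b1 b2 (A 1) (A 2)" using E[of 1 2] unfolding bb lin_sc .
  have E05: "(\<lambda>k. 0) = K2_br b1 b2 (A 0) (A 5)" using E[of 0 5] unfolding bb lin_0 .
  have E50: "(\<lambda>k. 0) = K2_br b1 b2 (A 5) (A 0)" using E[of 5 0] unfolding bb lin_0 .
  have z10: "A 1 0 = 0" using fun_cong[OF E01, of 0] by (simp add: brc)
  have z20: "A 2 0 = 0" using fun_cong[OF E20, of 0] by (simp add: brc)
  have z30: "A 3 0 = 0" using fun_cong[OF E30, of 0] by (simp add: brc)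
  have z40: "A 4 0 = 0" using fun_cong[OF E40, of 0] by (simp add: brc)
  have z50: "A 5 0 = 0" using fun_cong[OF E41, of 0] by (simp add: brc)
  have "linmap A (linmap B (ebas 0)) 0 = 1" using AB by (simp add: ebas_def)
  then have "linmap B (ebas 0) 0 * A 0 0 = 1" by (simp add: linc z10 z20 z30 z40 z50)
  then have w0: "A 0 0 \<noteq> 0" by auto
  have z51: "A 5 1 = 0" using fun_cong[OF E05, of 1] w0 by (simp add: brc z50)
  have z52: "A 5 2 = 0" using fun_cong[OF E05, of 2] w0 by (simp add: brc z50)
  have z53: "A 5 3 = 0" using fun_cong[OF E50, of 3] w0 by (simp add: brc)
  have z54: "A 5 4 = 0" using fun_cong[OF E50, of 4] w0 by (simp add: brc)
  have Z5: "A 5 5 \<noteq> 0"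
  proof
    assume h: "A 5 5 = 0"
    have "A 5 = (\<lambda>k. 0)"
    proof
      fix k show "A 5 k = 0" using six_cases[of k] h z50 z51 z52 z53 z54 by auto
    qed
    then have "linmap A (ebas 5) = (\<lambda>k. 0)" by (simp add: lin_e)
    then have "ebas 5 = linmap B (\<lambda>k. 0)" using BA by metis
    then have "ebas 5 = (\<lambda>k. (0::complex))" by (simp add: lin_0)
    then have "ebas 5 5 = (0::complex)" by simp
    then show False by (simp add: ebas_def)
  qed
  have z03: "A 0 3 = 0" using fun_cong[OF E00, of 3] w0 by (simp add: brc z53)
  have z04: "A 0 4 = 0" using fun_cong[OF E00, of 4] w0 by (simp add: brc z54)
  have "a1 * A 5 5 = b1 * A 0 0 * A 0 0" using fun_cong[OF E00, of 5] by (simp add: brc z03 z04)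
  then show "a1 = 0 \<longleftrightarrow> b1 = 0" using Z5 w0 by auto
  have z13: "A 1 3 = 0" using fun_cong[OF E01, of 3] by (simp add: brc z10)
  have z14: "A 1 4 = 0" using fun_cong[OF E01, of 4] by (simp add: brc z10)
  have "a2 * A 5 5 = b2 * (A 1 1 * A 2 2 - A 1 2 * A 2 1)"
    using fun_cong[OF E12, of 5] by (simp add: brc z10 z13 z14)
  then show "b2 = 0 \<longrightarrow> a2 = 0" using Z5 by auto
qed

lemma noniso:
  assumes "K2_isomorphic (a1,a2) (b1,b2)"
  shows "(a1 = 0 \<longleftrightarrow> b1 = 0) \<and> (a2 = 0 \<longleftrightarrow> b2 = 0)"
  using inv1[OF assms] inv1[OF iso_sym[OF assms]] by blast


definition diag :: "vec6 \<Rightarrow> 6 \<Rightarrow> 6 \<Rightarrow> complex" where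
  "diag d = (\<lambda>i k. if i = k then d k else 0)"

lemma lin_diag: "linmap (diag d) v = (\<lambda>k. v k * d k)"
  unfolding linmap_def diag_def by (simp add: fun_eq_iff ifm if_distrib[of "\<lambda>x. _ * x"] cong: if_cong)

lemma diag_iso:
  fixes d :: vec6
  assumes nz: "\<And>k. d k \<noteq> 0" and d0: "d 0 = 1" and h1: "d 5 * a1 = b1" and h2: "d 5 * a2 = b2 * d 1 * d 2"
    and h3: "d 5 = d 3 * d 2" and h4: "d 5 = d 4 * d 1"
  shows "K2_isomorphic (a1,a2) (b1,b2)"
  unfolding K2_isomorphic_def fst_conv snd_conv
proof (rule exI[of _ "diag d"], rule exI[of _ "diag (\<lambda>k. 1 / d k)"], intro conjI allI)
  fix v
  show "linmap (diag (\<lambda>k. 1 / d k)) (linmap (diag d) v) = v"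
    using nz by (simp add: lin_diag fun_eq_iff)
  show "linmap (diag d) (linmap (diag (\<lambda>k. 1 / d k)) v) = v"
    using nz by (simp add: lin_diag fun_eq_iff)
next
  fix u v
  show "linmap (diag d) (K2_br a1 a2 u v) = K2_br b1 b2 (linmap (diag d) u) (linmap (diag d) v)"
  proof
    fix k
    show "linmap (diag d) (K2_br a1 a2 u v) k = K2_br b1 b2 (linmap (diag d) u) (linmap (diag d) v) k"
      using six_cases[of k]
    proof (elim disjE)
      assume k: "k = 5"
      let ?L = "(a1 * u 0 * v 0 + a2 * (u 1 * v 2 - u 2 * v 1) - u 3 * v 2 + u 4 * v 1) * d 5"
      let ?R = "b1 * (u 0 * d 0) * (v 0 * d 0) + b2 * ((u 1 * d 1) * (v 2 * d 2) - (u 2 * d 2) * (v 1 * d 1))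
               - (u 3 * d 3) * (v 2 * d 2) + (u 4 * d 4) * (v 1 * d 1)"
      have "?R - ?L = (b1 - d 5 * a1) * (u 0 * v 0) + (b2 * d 1 * d 2 - d 5 * a2) * (u 1 * v 2 - u 2 * v 1)
           - (d 3 * d 2 - d 5) * (u 3 * v 2) + (d 4 * d 1 - d 5) * (u 4 * v 1)"
        unfolding d0 by (simp add: algebra_simps)
      also have "\<dots> = 0"
      proof -
        have z1: "b1 - d 5 * a1 = 0" using h1 by simp
        have z2: "b2 * d 1 * d 2 - d 5 * a2 = 0" using h2 by simp
        have z3: "d 3 * d 2 - d 5 = 0" using h3 by simp
        have z4: "d 4 * d 1 - d 5 = 0" using h4 by simp
        note z = z1 z2 z3 z4
        show ?thesis by (simp only: z) simp
      qed
      finally have "?L = ?R" by simp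
      then show ?thesis unfolding k lin_diag brc .
    qed (simp_all add: lin_diag brc d0 algebra_simps)
  qed
qed

lemma iso5:
  fixes s t x y c :: complex
  assumes "s \<noteq> 0" "t \<noteq> 0" "x \<noteq> 0" "y \<noteq> 0" "c \<noteq> 0"
    and "c * a1 = b1" "c * a2 = b2 * s * t" "c = x * t" "c = y * s"
  shows "K2_isomorphic (a1,a2) (b1,b2)"
proof -
  define d :: vec6 where "d = (\<lambda>k. if k = 0 then 1 else if k = 1 then s else if k = 2 then t
     else if k = 3 then x else if k = 4 then y else c)"
  have dv: "d 0 = 1" "d 1 = s" "d 2 = t" "d 3 = x" "d 4 = y" "d 5 = c"
    unfolding d_def by (simp_all add: distinct6 distinct6')
  have nz: "d k \<noteq> 0" for k
    using six_cases[of k] assms(1-5) dv by auto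
  show ?thesis
  proof (rule diag_iso[OF nz])
    show "d 0 = 1" by (rule dv)
    show "d 5 * a1 = b1" unfolding dv by (rule assms(6))
    show "d 5 * a2 = b2 * d 1 * d 2" unfolding dv by (rule assms(7))
    show "d 5 = d 3 * d 2" unfolding dv by (rule assms(8))
    show "d 5 = d 4 * d 1" unfolding dv by (rule assms(9))
  qed
qed

lemma exists_form: "\<exists>b\<in>{(1,1),(1,0),(0,1),(0,0)}. K2_isomorphic (a1,a2) b"
proof (cases "a1 = 0"; cases "a2 = 0")
  assume "a1 = 0" "a2 = 0"
  then have "K2_isomorphic (a1,a2) (0,0)" by (intro iso5[of 1 1 1 1 1]) simp_all
  then show ?thesis by blast
next
  assume "a1 = 0" "a2 \<noteq> 0"
  then have "K2_isomorphic (a1,a2) (0,1)" by (intro iso5[of a2 1 1 "1/a2" 1]) simp_all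
  then show ?thesis by blast
next
  assume "a1 \<noteq> 0" "a2 = 0"
  then have "K2_isomorphic (a1,a2) (1,0)" by (intro iso5[of 1 1 "1/a1" "1/a1" "1/a1"]) simp_all
  then show ?thesis by blast
next
  assume "a1 \<noteq> 0" "a2 \<noteq> 0"
  then have "K2_isomorphic (a1,a2) (1,1)" by (intro iso5[of "a2/a1" 1 "1/a1" "1/a2" "1/a1"]) simp_all
  then show ?thesis by blast
qed

theorem mainTheorem5:
  shows "(\<forall>a1 a2. \<exists>b\<in>{(1,1),(1,0),(0,1),(0,0)}. K2_isomorphic (a1,a2) b) \<and>
         (\<forall>b\<in>{(1,1),(1,0),(0,1),(0,0)}. \<forall>c\<in>{(1,1),(1,0),(0,1),(0,0)}.
             b \<noteq> c \<longrightarrow> \<not> K2_isomorphic b c)"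
proof (intro conjI allI ballI impI)
  fix a1 a2 show "\<exists>b\<in>{(1,1),(1,0),(0,1),(0,0)}. K2_isomorphic (a1,a2) b" by (rule exists_form)
next
  fix b c :: "complex \<times> complex"
  assume "b \<in> {(1,1),(1,0),(0,1),(0,0)}" "c \<in> {(1,1),(1,0),(0,1),(0,0)}" "b \<noteq> c"
  moreover have "K2_isomorphic b c \<Longrightarrow> (fst b = 0 \<longleftrightarrow> fst c = 0) \<and> (snd b = 0 \<longleftrightarrow> snd c = 0)"
    using noniso[of "fst b" "snd b" "fst c" "snd c"] by simp
  ultimately show "\<not> K2_isomorphic b c" by auto
qed
end
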